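(* Let $n\ge 1$ and $K,T\in\mathcal S_n$. Then \[ \frac{K^c+T^c}{2}=\left\{x\in\mathbb R^n:\ \mathrm{Outrad}\big((K-x)\cup(x-T)\big)\le 1\right\}. \]
   Context: $B(x,r)$ is the closed Euclidean ball. For $A\subseteq\mathbb R^n$, $A^c=\bigcap_{x\in A}B(x,1)$ (with $\emptyset^c=\mathbb R^n$). $\mathcal S_n$ is the class of all sets of the form $\bigcap_{x\in A}B(x,1)$, $A\subseteq\mathbb R^n$. For a set $A$, $\mathrm{Outrad}(A)$ is the out-radius: the infimum of $R\ge0$ such that $A\subseteq B(z,R)$ for some $z\in\mathbb R^n$. $K-x=\{k-x:k\in K\}$, $x-T=\{x-t:t\in T\}$, and the sum on the left is the Minkowski sum. *)

theory Defs
  imports "HOL-Analysis.Analysis" "HOL-Library.Extended_Real"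
begin

text \<open>A^c = intersection of closed unit balls centred at points of A (UNIV for A empty).\<close>
definition ccomp :: "'a::euclidean_space set \<Rightarrow> 'a set" where
  "ccomp A = (\<Inter>x\<in>A. cball x 1)"

definition Sn :: "'a::euclidean_space set set" where
  "Sn = {ccomp A | A. True}"

text \<open>Out-radius, valued in extended reals (infinity for unbounded sets).\<close>
definition Outrad :: "'a::euclidean_space set \<Rightarrow> ereal" where
  "Outrad A = Inf {ereal R | R. R \<ge> 0 \<and> (\<exists>z. A \<subseteq> cball z R)}"

end

theory Submission
  imports Defs
begin

lemma half_half: "(1/2) *\<^sub>R a + (1/2) *\<^sub>R a = (a::'a::real_vector)"
  by (simp flip: scaleR_add_left)

lemma outrad_attained:
  fixes U :: "'a::euclidean_space set"
  assumes "Outrad U \<le> 1"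
  shows "\<exists>z. U \<subseteq> cball z 1"
proof (cases "U = {}")
  case True then show ?thesis by auto
next
  case False
  then obtain p where p: "p \<in> U" by auto
  define r :: "nat \<Rightarrow> real" where "r n = 1 + 1 / real (Suc n)" for n
  have r1: "1 < r n" for n unfolding r_def by simp
  have r2: "r n \<le> 2" for n unfolding r_def by (simp add: divide_le_eq)
  have rmono: "i \<le> m \<Longrightarrow> r m \<le> r i" for i m
    unfolding r_def by (simp add: frac_le)
  have ex: "\<exists>z. U \<subseteq> cball z (r n)" for n
  proof -
    have "Inf {ereal R | R. R \<ge> 0 \<and> (\<exists>z. U \<subseteq> cball z R)} < ereal (r n)"
      using order_le_less_trans[OF assms[unfolded Outrad_def one_ereal_def], of "ereal (r n)"] r1[of n]
      by simp
    then obtain R z where "U \<subseteq> cball z R" "R < r n"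
      by (auto simp: Inf_less_iff)
    then show ?thesis
      using subset_cball[of R "r n" z] by (meson order.trans less_imp_le)
  qed
  define f where "f n = (\<Inter>u\<in>U. cball u (r n))" for n
  have fmem: "z \<in> f n \<longleftrightarrow> U \<subseteq> cball z (r n)" for z n
    unfolding f_def by (auto simp: dist_commute)
  have "cball p 3 \<inter> (\<Inter>i\<in>UNIV. f i) \<noteq> {}"
  proof (rule compact_imp_fip_image)
    show "compact (cball p 3)" by simp
    show "closed (f i)" for i unfolding f_def by auto
    fix I' :: "nat set" assume "finite I'"
    define m where "m = Max (insert 0 I')"
    have im: "i \<in> I' \<Longrightarrow> i \<le> m" for i unfolding m_def using \<open>finite I'\<close> by auto
    obtain z where z: "U \<subseteq> cball z (r m)" using ex by blast
    have "dist p z \<le> r m" using z p by (auto simp: dist_commute)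
    then have "z \<in> cball p 3" using r2[of m] by simp
    moreover have "z \<in> f i" if "i \<in> I'" for i
      unfolding fmem using z subset_cball[OF rmono[OF im[OF that]]] by (auto simp del: subset_cball)
    ultimately show "cball p 3 \<inter> (\<Inter>i\<in>I'. f i) \<noteq> {}" by blast
  qed
  then obtain z where z: "\<And>n. U \<subseteq> cball z (r n)" using fmem by blast
  have "U \<subseteq> cball z 1"
  proof
    fix u assume u: "u \<in> U"
    have D: "dist z u \<le> 1 + 1 / real (Suc n)" for n using z[of n] u unfolding r_def by auto
    have "dist z u \<le> 1"
    proof (rule field_le_epsilon)
      fix e :: real assume "0 < e"
      then obtain n where "inverse (real (Suc n)) < e" using reals_Archimedean by blast
      moreover have "dist z u \<le> 1 + inverse (real (Suc n))"
        using D[of n] by (simp add: divide_inverse)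
      ultimately show "dist z u \<le> 1 + e" by linarith
    qed
    then show "u \<in> cball z 1" by simp
  qed
  then show ?thesis by blast
qed

lemma outrad_le1:
  fixes U :: "'a::euclidean_space set"
  assumes "U \<subseteq> cball z 1"
  shows "Outrad U \<le> 1"
proof -
  have "ereal 1 \<in> {ereal R | R. R \<ge> 0 \<and> (\<exists>z. U \<subseteq> cball z R)}" using assms by auto
  then have "Outrad U \<le> ereal 1" unfolding Outrad_def by (rule Inf_lower)
  then show ?thesis by (simp add: one_ereal_def)
qed

theorem lemma1p27:
  fixes K T :: "'a::euclidean_space set"
  assumes "K \<in> Sn" and "T \<in> Sn"
  shows "{(1/2) *\<^sub>R (a + b) | a b. a \<in> ccomp K \<and> b \<in> ccomp T}
         = {x. Outrad ((\<lambda>k. k - x) ` K \<union> (\<lambda>t. x - t) ` T) \<le> 1}"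
proof (intro equalityI subsetI)
  fix x assume "x \<in> {(1/2) *\<^sub>R (a + b) | a b. a \<in> ccomp K \<and> b \<in> ccomp T}"
  then obtain a b where x: "x = (1/2) *\<^sub>R (a + b)" and a: "a \<in> ccomp K" and b: "b \<in> ccomp T"
    by auto
  define z where "z = (1/2) *\<^sub>R (a - b)"
  have "(\<lambda>k. k - x) ` K \<union> (\<lambda>t. x - t) ` T \<subseteq> cball z 1"
  proof
    fix u assume "u \<in> (\<lambda>k. k - x) ` K \<union> (\<lambda>t. x - t) ` T"
    then show "u \<in> cball z 1"
    proof
      assume "u \<in> (\<lambda>k. k - x) ` K"
      then obtain k where k: "k \<in> K" "u = k - x" by auto
      have "dist a k \<le> 1" using a k unfolding ccomp_def by (auto simp: dist_commute)
      moreover have "z - u = a - k" unfolding z_def x k(2) by (simp add: algebra_simps half_half)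
      ultimately show ?thesis by (simp add: dist_norm)
    next
      assume "u \<in> (\<lambda>t. x - t) ` T"
      then obtain t where t: "t \<in> T" "u = x - t" by auto
      have "dist b t \<le> 1" using b t unfolding ccomp_def by (auto simp: dist_commute)
      moreover have "z - u = t - b" unfolding z_def x t(2) by (simp add: algebra_simps half_half)
      ultimately show ?thesis
        using dist_norm[of z u] dist_norm[of t b] dist_commute[of t b] by simp
    qed
  qed
  then show "x \<in> {x. Outrad ((\<lambda>k. k - x) ` K \<union> (\<lambda>t. x - t) ` T) \<le> 1}"
    using outrad_le1 by blast
next
  fix x assume "x \<in> {x. Outrad ((\<lambda>k. k - x) ` K \<union> (\<lambda>t. x - t) ` T) \<le> 1}"
  then obtain z where z: "(\<lambda>k. k - x) ` K \<union> (\<lambda>t. x - t) ` T \<subseteq> cball z 1"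
    using outrad_attained by blast
  have a: "x + z \<in> ccomp K" unfolding ccomp_def
  proof
    fix k assume "k \<in> K"
    then have "dist z (k - x) \<le> 1" using z by auto
    moreover have "dist z (k - x) = dist (x + z) k" by (simp add: dist_norm algebra_simps)
    ultimately show "x + z \<in> cball k 1" by (simp add: dist_commute)
  qed
  have b: "x - z \<in> ccomp T" unfolding ccomp_def
  proof
    fix t assume "t \<in> T"
    then have "dist z (x - t) \<le> 1" using z by auto
    moreover have "dist z (x - t) = norm (- ((x - z) - t))"
      by (simp add: dist_norm algebra_simps)
    moreover have "norm (- ((x - z) - t)) = dist (x - z) t"
      by (simp only: norm_minus_cancel dist_norm)
    ultimately show "x - z \<in> cball t 1" by (simp add: dist_commute)
  qed
  have "x = (1/2) *\<^sub>R ((x + z) + (x - z))" by (simp add: algebra_simps half_half)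
  then show "x \<in> {(1/2) *\<^sub>R (a + b) | a b. a \<in> ccomp K \<and> b \<in> ccomp T}"
    using a b by blast
qed

end
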